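(* Let $0<f_1<f_2<f_3$ and consider on $M_h$ with $2h=1$ the reduced Lamé integrable system $(F_L,G_L)$, where $F_L=\ell_{12}^2+\ell_{13}^2+\ell_{14}^2$ and $G_L=f_1\ell_{34}^2+f_2\ell_{24}^2+f_3\ell_{23}^2$. The set of critical values of the momentum map $(F_L,G_L):M_h\to\mathbb R^2$ is composed of (parts of) the four straight lines $\mathfrak L_j: F_L=1-\frac{1}{f_j}G_L$ for $j=1,2,3$ and $\mathfrak L_4: F_L=0$.
   Context: $\mathbf L=(\ell_{12},\ell_{13},\ell_{14},\ell_{23},\ell_{24},\ell_{34})\in\mathbb R^6\cong\mathfrak{so}(4)^*$ with the Lie–Poisson bracket of $\mathfrak{so}(4)$ (extending $\ell_{ji}=-\ell_{ij}$: $\{\ell_{ij},\ell_{jk}\}=-\ell_{ik}$ for distinct $i,j,k$, and $\{\ell_{ij},\ell_{kl}\}=0$ when $\{i,j\}\cap\{k,l\}=\emptyset$). $M_h=\{\mathbf L:\sum_{i<j}\ell_{ij}^2=2h,\ \ell_{12}\ell_{34}-\ell_{13}\ell_{24}+\ell_{14}\ell_{23}=0\}\cong S^2\times S^2$ is a symplectic leaf. This system arises from separating the geodesic flow on $S^3$ in Lamé coordinates. *)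

theory Defs
  imports "HOL-Analysis.Analysis"
begin

definition l12 :: "real^6 \<Rightarrow> real" where "l12 L = L $ 1"
definition l13 :: "real^6 \<Rightarrow> real" where "l13 L = L $ 2"
definition l14 :: "real^6 \<Rightarrow> real" where "l14 L = L $ 3"
definition l23 :: "real^6 \<Rightarrow> real" where "l23 L = L $ 4"
definition l24 :: "real^6 \<Rightarrow> real" where "l24 L = L $ 5"
definition l34 :: "real^6 \<Rightarrow> real" where "l34 L = L $ 6"

definition cas1 :: "real^6 \<Rightarrow> real" where
  "cas1 L = (l12 L)^2 + (l13 L)^2 + (l14 L)^2 + (l23 L)^2 + (l24 L)^2 + (l34 L)^2"
definition cas2 :: "real^6 \<Rightarrow> real" where
  "cas2 L = l12 L * l34 L - l13 L * l24 L + l14 L * l23 L"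

definition Mh :: "real \<Rightarrow> (real^6) set" where
  "Mh h = {L. cas1 L = 2 * h \<and> cas2 L = 0}"

text \<open>Tangent space of M_h at p (M_h is a regular level set of the Casimirs).\<close>
definition leaf_tangent :: "real^6 \<Rightarrow> (real^6) set" where
  "leaf_tangent p = {v. frechet_derivative cas1 (at p) v = 0 \<and> frechet_derivative cas2 (at p) v = 0}"

definition crit_point_on_leaf ::
  "real \<Rightarrow> (real^6 \<Rightarrow> real) \<Rightarrow> (real^6 \<Rightarrow> real) \<Rightarrow> real^6 \<Rightarrow> bool" where
  "crit_point_on_leaf h F G p \<longleftrightarrow> p \<in> Mh h \<and>
     (\<exists>a b. (a, b) \<noteq> (0, 0) \<and>
        (\<forall>v \<in> leaf_tangent p.
           a * frechet_derivative F (at p) v + b * frechet_derivative G (at p) v = 0))"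

definition crit_values_on_leaf ::
  "real \<Rightarrow> (real^6 \<Rightarrow> real) \<Rightarrow> (real^6 \<Rightarrow> real) \<Rightarrow> (real \<times> real) set" where
  "crit_values_on_leaf h F G = (\<lambda>p. (F p, G p)) ` {p. crit_point_on_leaf h F G p}"

definition F_L :: "real^6 \<Rightarrow> real" where
  "F_L L = (l12 L)^2 + (l13 L)^2 + (l14 L)^2"
definition G_L :: "real \<Rightarrow> real \<Rightarrow> real \<Rightarrow> real^6 \<Rightarrow> real" where
  "G_L f1 f2 f3 L = f1 * (l34 L)^2 + f2 * (l24 L)^2 + f3 * (l23 L)^2"

end

theory Submission imports Defs begin

lemma hd_nth: "((\<lambda>x::real^6. x $ i) has_derivative (\<lambda>v. v $ i)) (at p)"
  by (simp add: bounded_linear_imp_has_derivative bounded_linear_vec_nth)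
lemma hd_sq: "((\<lambda>x::real^6. (x$i)^2) has_derivative (\<lambda>v. 2*(p$i * v$i))) (at p)"
proof -
  have "((\<lambda>x::real^6. x$i * x$i) has_derivative (\<lambda>v. p$i * v$i + v$i * p$i)) (at p)"
    by (rule has_derivative_mult[OF hd_nth hd_nth])
  then show ?thesis by (simp add: power2_eq_square algebra_simps)
qed
lemma hd_prod: "((\<lambda>x::real^6. x$i * x$j) has_derivative (\<lambda>v. p$i * v$j + v$i * p$j)) (at p)"
    by (rule has_derivative_mult[OF hd_nth hd_nth])

lemma dF: "frechet_derivative F_L (at p) = (\<lambda>v. 2*(p$1 * v$1 + p$2 * v$2 + p$3 * v$3))"
proof -
  have h: "(F_L has_derivative (\<lambda>v. 2*(p$1 * v$1) + 2*(p$2 * v$2) + 2*(p$3 * v$3))) (at p)"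
    unfolding F_L_def l12_def l13_def l14_def
    by (intro has_derivative_add hd_sq)
  have e: "(\<lambda>v::real^6. 2*(p$1 * v$1) + 2*(p$2 * v$2) + 2*(p$3 * v$3)) = (\<lambda>v. 2*(p$1 * v$1 + p$2 * v$2 + p$3 * v$3))"
    by (rule ext) (simp only: distrib_left)
  show ?thesis using frechet_derivative_at[OF h] unfolding e by (rule sym)
qed

lemma dG: "frechet_derivative (G_L f1 f2 f3) (at p) = (\<lambda>v. 2*(f1 * p$6 * v$6 + f2 * p$5 * v$5 + f3 * p$4 * v$4))"
proof -
  have h: "((G_L f1 f2 f3) has_derivative (\<lambda>v. f1 * (2*(p$6 * v$6)) + f2 * (2*(p$5 * v$5)) + f3 * (2*(p$4 * v$4)))) (at p)"
    unfolding G_L_def l23_def l24_def l34_def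
    by (intro has_derivative_add has_derivative_mult_right hd_sq)
  have e: "(\<lambda>v::real^6. f1 * (2*(p$6 * v$6)) + f2 * (2*(p$5 * v$5)) + f3 * (2*(p$4 * v$4))) = (\<lambda>v. 2*(f1 * p$6 * v$6 + f2 * p$5 * v$5 + f3 * p$4 * v$4))"
    by (rule ext) (simp only: distrib_left mult.assoc mult.left_commute add.assoc add.commute add.left_commute diff_conv_add_uminus minus_add_distrib mult.commute)
  show ?thesis using frechet_derivative_at[OF h] unfolding e by (rule sym)
qed

lemma dC1: "frechet_derivative cas1 (at p) = (\<lambda>v. 2*(p$1 * v$1 + p$2 * v$2 + p$3 * v$3 + p$4 * v$4 + p$5 * v$5 + p$6 * v$6))"
proof -
  have h: "(cas1 has_derivative (\<lambda>v. 2*(p$1 * v$1) + 2*(p$2 * v$2) + 2*(p$3 * v$3) + 2*(p$4 * v$4) + 2*(p$5 * v$5) + 2*(p$6 * v$6))) (at p)"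
    unfolding cas1_def l12_def l13_def l14_def l23_def l24_def l34_def
    by (intro has_derivative_add hd_sq)
  have e: "(\<lambda>v::real^6. 2*(p$1 * v$1) + 2*(p$2 * v$2) + 2*(p$3 * v$3) + 2*(p$4 * v$4) + 2*(p$5 * v$5) + 2*(p$6 * v$6)) = (\<lambda>v. 2*(p$1 * v$1 + p$2 * v$2 + p$3 * v$3 + p$4 * v$4 + p$5 * v$5 + p$6 * v$6))"
    by (rule ext) (simp only: distrib_left mult.assoc mult.left_commute add.assoc add.commute add.left_commute diff_conv_add_uminus minus_add_distrib mult.commute)
  show ?thesis using frechet_derivative_at[OF h] unfolding e by (rule sym)
qed

lemma dC2: "frechet_derivative cas2 (at p) = (\<lambda>v. p$6 * v$1 + p$1 * v$6 - p$5 * v$2 - p$2 * v$5 + p$4 * v$3 + p$3 * v$4)"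
proof -
  have h: "(cas2 has_derivative (\<lambda>v. (p$1 * v$6 + v$1 * p$6) - (p$2 * v$5 + v$2 * p$5) + (p$3 * v$4 + v$3 * p$4))) (at p)"
    unfolding cas2_def l12_def l13_def l14_def l23_def l24_def l34_def
    by (intro has_derivative_add has_derivative_diff hd_prod)
  have e: "(\<lambda>v::real^6. (p$1 * v$6 + v$1 * p$6) - (p$2 * v$5 + v$2 * p$5) + (p$3 * v$4 + v$3 * p$4)) = (\<lambda>v. p$6 * v$1 + p$1 * v$6 - p$5 * v$2 - p$2 * v$5 + p$4 * v$3 + p$3 * v$4)"
    by (rule ext) (simp only: distrib_left mult.assoc mult.left_commute add.assoc add.commute add.left_commute diff_conv_add_uminus minus_add_distrib mult.commute)
  show ?thesis using frechet_derivative_at[OF h] unfolding e by (rule sym)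
qed
lemma alg:
  fixes x1 x2 x3 x4 x5 x6 a b lam mu f1 f2 f3 :: real
  assumes "0 < f1" and "f1 < f2" and "f2 < f3"
  and S: "x1^2+x2^2+x3^2+x4^2+x5^2+x6^2 = 1" and C: "x1*x6 - x2*x5 + x3*x4 = 0"
  and ab: "(a,b) \<noteq> (0,0)"
  and e1: "a*x1 = lam*x1 + mu*x6" and e2: "a*x2 = lam*x2 - mu*x5" and e3: "a*x3 = lam*x3 + mu*x4"
  and e4: "b*f3*x4 = lam*x4 + mu*x3" and e5: "b*f2*x5 = lam*x5 - mu*x2" and e6: "b*f1*x6 = lam*x6 + mu*x1"
  shows "x1^2+x2^2+x3^2 = 1 - (f1*x6^2+f2*x5^2+f3*x4^2)/f1 \<or>
         x1^2+x2^2+x3^2 = 1 - (f1*x6^2+f2*x5^2+f3*x4^2)/f2 \<or>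
         x1^2+x2^2+x3^2 = 1 - (f1*x6^2+f2*x5^2+f3*x4^2)/f3 \<or> x1^2+x2^2+x3^2 = 0"
proof (cases "mu = 0")
  case False
  have key: "mu * 0 = (a - lam) * (x1^2+x2^2+x3^2)"
  proof -
    have "mu * (x1*x6 - x2*x5 + x3*x4) = x1*(mu*x6) + x2*(-mu*x5) + x3*(mu*x4)" by algebra
    also have "\<dots> = (a - lam) * (x1^2+x2^2+x3^2)" using e1 e2 e3 by algebra
    finally show ?thesis using C by simp
  qed
  show ?thesis
  proof (cases "a = lam")
    case True
    then have "x6 = 0" "x5 = 0" "x4 = 0" using e1 e2 e3 False by auto
    then have "x1 = 0" "x2 = 0" "x3 = 0" using e4 e5 e6 False by auto
    then show ?thesis using S \<open>x6 = 0\<close> \<open>x5 = 0\<close> \<open>x4 = 0\<close> by simp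
  next
    case False2: False
    have "x1^2+x2^2+x3^2 = 0" using key False2 by simp
    then show ?thesis by simp
  qed
next
  case True
  show ?thesis
  proof (cases "x1^2+x2^2+x3^2 = 0")
    case True then show ?thesis by simp
  next
    case False
    then have "x1 \<noteq> 0 \<or> x2 \<noteq> 0 \<or> x3 \<noteq> 0" by auto
    then have al: "a = lam" using e1 e2 e3 \<open>mu = 0\<close> by auto
    have h4: "(b*f3 - a)*x4 = 0" and h5: "(b*f2 - a)*x5 = 0" and h6: "(b*f1 - a)*x6 = 0"
      using e4 e5 e6 al \<open>mu = 0\<close> by (auto simp: algebra_simps)
    have F: "x1^2+x2^2+x3^2 = 1 - x4^2 - x5^2 - x6^2" using S by simp
    show ?thesis
    proof (cases "b = 0")
      case True
      then have "a \<noteq> 0" using ab by simp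
      then have "x4 = 0" "x5 = 0" "x6 = 0" using h4 h5 h6 True by auto
      then show ?thesis using F by simp
    next
      case bnz: False
      have n45: "x4 = 0 \<or> x5 = 0"
      proof (rule ccontr)
        assume "\<not> ?thesis"
        then have "b*f3 = a" "b*f2 = a" using h4 h5 by auto
        then show False using bnz assms(3) by auto
      qed
      have n46: "x4 = 0 \<or> x6 = 0"
      proof (rule ccontr)
        assume "\<not> ?thesis"
        then have "b*f3 = a" "b*f1 = a" using h4 h6 by auto
        then show False using bnz assms(2,3) by auto
      qed
      have n56: "x5 = 0 \<or> x6 = 0"
      proof (rule ccontr)
        assume "\<not> ?thesis"
        then have "b*f2 = a" "b*f1 = a" using h5 h6 by auto
        then show False using bnz assms(2) by auto
      qed
      have f1: "f1 \<noteq> 0" "f2 \<noteq> 0" "f3 \<noteq> 0" using assms(1-3) by auto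
      show ?thesis
      proof -
        have "(x5 = 0 \<and> x6 = 0) \<or> (x4 = 0 \<and> x6 = 0) \<or> (x4 = 0 \<and> x5 = 0)"
          using n45 n46 n56 by blast
        moreover
        { assume z: "x5 = 0" "x6 = 0"
          have "(f1*x6^2+f2*x5^2+f3*x4^2)/f3 = x4^2" using z f1 by simp
          then have ?thesis using F z by simp }
        moreover
        { assume z: "x4 = 0" "x6 = 0"
          have "(f1*x6^2+f2*x5^2+f3*x4^2)/f2 = x5^2" using z f1 by simp
          then have ?thesis using F z by simp }
        moreover
        { assume z: "x4 = 0" "x5 = 0"
          have "(f1*x6^2+f2*x5^2+f3*x4^2)/f1 = x6^2" using z f1 by simp
          then have ?thesis using F z by simp }
        ultimately show ?thesis by blast
      qed
    qed
  qed
qed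


theorem proposition6:
  fixes f1 f2 f3 :: real
  assumes "0 < f1" and "f1 < f2" and "f2 < f3"
  shows "crit_values_on_leaf (1/2) F_L (G_L f1 f2 f3) \<subseteq>
           {(x, y). x = 1 - y / f1} \<union> {(x, y). x = 1 - y / f2} \<union>
           {(x, y). x = 1 - y / f3} \<union> {(x, y). x = 0}"
proof
  fix z assume "z \<in> crit_values_on_leaf (1/2) F_L (G_L f1 f2 f3)"
  then obtain p where z: "z = (F_L p, G_L f1 f2 f3 p)" and cp: "crit_point_on_leaf (1/2) F_L (G_L f1 f2 f3) p"
    unfolding crit_values_on_leaf_def by auto
  from cp have "p \<in> Mh (1/2)" unfolding crit_point_on_leaf_def by blast
  then have S: "(p$1)^2+(p$2)^2+(p$3)^2+(p$4)^2+(p$5)^2+(p$6)^2 = 1"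
    and C: "p$1 * p$6 - p$2 * p$5 + p$3 * p$4 = 0"
    unfolding Mh_def cas1_def cas2_def l12_def l13_def l14_def l23_def l24_def l34_def by auto
  from cp obtain a b where ab: "(a,b) \<noteq> (0,0)" and
    H: "\<And>v. v \<in> leaf_tangent p \<Longrightarrow> a * frechet_derivative F_L (at p) v + b * frechet_derivative (G_L f1 f2 f3) (at p) v = 0"
    unfolding crit_point_on_leaf_def by blast
  define Jp :: "real^6" where "Jp = (\<chi> i. if i = 1 then p$6 else if i = 2 then - p$5 else if i = 3 then p$4 else if i = 4 then p$3 else if i = 5 then - p$2 else p$1)"
  define vk :: "6 \<Rightarrow> real^6" where "vk k = (\<chi> i. (if i = k then 1 else 0) - p$k * p$i - Jp$k * Jp$i)" for k
  define lam where "lam = a*((p$1)^2+(p$2)^2+(p$3)^2) + b*(f3*(p$4)^2 + f2*(p$5)^2 + f1*(p$6)^2)"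
  define mu where "mu = a*(p$1 * p$6 - p$2 * p$5 + p$3 * p$4) + b*(f3 * p$4 * p$3 - f2 * p$5 * p$2 + f1 * p$6 * p$1)"
  have "frechet_derivative cas1 (at p) (vk 1) = 2*(p$1 * (1 - ((p$1)^2+(p$2)^2+(p$3)^2+(p$4)^2+(p$5)^2+(p$6)^2)) - (p$6) * (2 * (p$1 * p$6 - p$2 * p$5 + p$3 * p$4)))"
    unfolding dC1 by (simp add: vk_def Jp_def, simp add: algebra_simps power2_eq_square)
  moreover have "frechet_derivative cas2 (at p) (vk 1) = (p$6) * (1 - ((p$1)^2+(p$2)^2+(p$3)^2+(p$4)^2+(p$5)^2+(p$6)^2)) - p$1 * (2 * (p$1 * p$6 - p$2 * p$5 + p$3 * p$4))"
    unfolding dC2 by (simp add: vk_def Jp_def, simp add: algebra_simps power2_eq_square)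
  ultimately have "vk 1 \<in> leaf_tangent p"
    unfolding leaf_tangent_def using S C by simp
  then have "a * frechet_derivative F_L (at p) (vk 1) + b * frechet_derivative (G_L f1 f2 f3) (at p) (vk 1) = 0" by (rule H)
  moreover have "a * frechet_derivative F_L (at p) (vk 1) + b * frechet_derivative (G_L f1 f2 f3) (at p) (vk 1) = 2 * (a * p$1 - lam * p$1 - mu * (p$6))"
    unfolding dF dG lam_def mu_def by (simp add: vk_def Jp_def, simp add: algebra_simps power2_eq_square)
  ultimately have e1: "a * p$1 = lam * p$1 + mu * p$6" by simp
  have "frechet_derivative cas1 (at p) (vk 2) = 2*(p$2 * (1 - ((p$1)^2+(p$2)^2+(p$3)^2+(p$4)^2+(p$5)^2+(p$6)^2)) - (- p$5) * (2 * (p$1 * p$6 - p$2 * p$5 + p$3 * p$4)))"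
    unfolding dC1 by (simp add: vk_def Jp_def, simp add: algebra_simps power2_eq_square)
  moreover have "frechet_derivative cas2 (at p) (vk 2) = (- p$5) * (1 - ((p$1)^2+(p$2)^2+(p$3)^2+(p$4)^2+(p$5)^2+(p$6)^2)) - p$2 * (2 * (p$1 * p$6 - p$2 * p$5 + p$3 * p$4))"
    unfolding dC2 by (simp add: vk_def Jp_def, simp add: algebra_simps power2_eq_square)
  ultimately have "vk 2 \<in> leaf_tangent p"
    unfolding leaf_tangent_def using S C by simp
  then have "a * frechet_derivative F_L (at p) (vk 2) + b * frechet_derivative (G_L f1 f2 f3) (at p) (vk 2) = 0" by (rule H)
  moreover have "a * frechet_derivative F_L (at p) (vk 2) + b * frechet_derivative (G_L f1 f2 f3) (at p) (vk 2) = 2 * (a * p$2 - lam * p$2 - mu * (- p$5))"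
    unfolding dF dG lam_def mu_def by (simp add: vk_def Jp_def, simp add: algebra_simps power2_eq_square)
  ultimately have e2: "a * p$2 = lam * p$2 - mu * p$5" by simp
  have "frechet_derivative cas1 (at p) (vk 3) = 2*(p$3 * (1 - ((p$1)^2+(p$2)^2+(p$3)^2+(p$4)^2+(p$5)^2+(p$6)^2)) - (p$4) * (2 * (p$1 * p$6 - p$2 * p$5 + p$3 * p$4)))"
    unfolding dC1 by (simp add: vk_def Jp_def, simp add: algebra_simps power2_eq_square)
  moreover have "frechet_derivative cas2 (at p) (vk 3) = (p$4) * (1 - ((p$1)^2+(p$2)^2+(p$3)^2+(p$4)^2+(p$5)^2+(p$6)^2)) - p$3 * (2 * (p$1 * p$6 - p$2 * p$5 + p$3 * p$4))"
    unfolding dC2 by (simp add: vk_def Jp_def, simp add: algebra_simps power2_eq_square)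
  ultimately have "vk 3 \<in> leaf_tangent p"
    unfolding leaf_tangent_def using S C by simp
  then have "a * frechet_derivative F_L (at p) (vk 3) + b * frechet_derivative (G_L f1 f2 f3) (at p) (vk 3) = 0" by (rule H)
  moreover have "a * frechet_derivative F_L (at p) (vk 3) + b * frechet_derivative (G_L f1 f2 f3) (at p) (vk 3) = 2 * (a * p$3 - lam * p$3 - mu * (p$4))"
    unfolding dF dG lam_def mu_def by (simp add: vk_def Jp_def, simp add: algebra_simps power2_eq_square)
  ultimately have e3: "a * p$3 = lam * p$3 + mu * p$4" by simp
  have "frechet_derivative cas1 (at p) (vk 4) = 2*(p$4 * (1 - ((p$1)^2+(p$2)^2+(p$3)^2+(p$4)^2+(p$5)^2+(p$6)^2)) - (p$3) * (2 * (p$1 * p$6 - p$2 * p$5 + p$3 * p$4)))"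
    unfolding dC1 by (simp add: vk_def Jp_def, simp add: algebra_simps power2_eq_square)
  moreover have "frechet_derivative cas2 (at p) (vk 4) = (p$3) * (1 - ((p$1)^2+(p$2)^2+(p$3)^2+(p$4)^2+(p$5)^2+(p$6)^2)) - p$4 * (2 * (p$1 * p$6 - p$2 * p$5 + p$3 * p$4))"
    unfolding dC2 by (simp add: vk_def Jp_def, simp add: algebra_simps power2_eq_square)
  ultimately have "vk 4 \<in> leaf_tangent p"
    unfolding leaf_tangent_def using S C by simp
  then have "a * frechet_derivative F_L (at p) (vk 4) + b * frechet_derivative (G_L f1 f2 f3) (at p) (vk 4) = 0" by (rule H)
  moreover have "a * frechet_derivative F_L (at p) (vk 4) + b * frechet_derivative (G_L f1 f2 f3) (at p) (vk 4) = 2 * (b * f3 * p$4 - lam * p$4 - mu * (p$3))"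
    unfolding dF dG lam_def mu_def by (simp add: vk_def Jp_def, simp add: algebra_simps power2_eq_square)
  ultimately have e4: "b * f3 * p$4 = lam * p$4 + mu * p$3" by simp
  have "frechet_derivative cas1 (at p) (vk 5) = 2*(p$5 * (1 - ((p$1)^2+(p$2)^2+(p$3)^2+(p$4)^2+(p$5)^2+(p$6)^2)) - (- p$2) * (2 * (p$1 * p$6 - p$2 * p$5 + p$3 * p$4)))"
    unfolding dC1 by (simp add: vk_def Jp_def, simp add: algebra_simps power2_eq_square)
  moreover have "frechet_derivative cas2 (at p) (vk 5) = (- p$2) * (1 - ((p$1)^2+(p$2)^2+(p$3)^2+(p$4)^2+(p$5)^2+(p$6)^2)) - p$5 * (2 * (p$1 * p$6 - p$2 * p$5 + p$3 * p$4))"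
    unfolding dC2 by (simp add: vk_def Jp_def, simp add: algebra_simps power2_eq_square)
  ultimately have "vk 5 \<in> leaf_tangent p"
    unfolding leaf_tangent_def using S C by simp
  then have "a * frechet_derivative F_L (at p) (vk 5) + b * frechet_derivative (G_L f1 f2 f3) (at p) (vk 5) = 0" by (rule H)
  moreover have "a * frechet_derivative F_L (at p) (vk 5) + b * frechet_derivative (G_L f1 f2 f3) (at p) (vk 5) = 2 * (b * f2 * p$5 - lam * p$5 - mu * (- p$2))"
    unfolding dF dG lam_def mu_def by (simp add: vk_def Jp_def, simp add: algebra_simps power2_eq_square)
  ultimately have e5: "b * f2 * p$5 = lam * p$5 - mu * p$2" by simp
  have "frechet_derivative cas1 (at p) (vk 6) = 2*(p$6 * (1 - ((p$1)^2+(p$2)^2+(p$3)^2+(p$4)^2+(p$5)^2+(p$6)^2)) - (p$1) * (2 * (p$1 * p$6 - p$2 * p$5 + p$3 * p$4)))"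
    unfolding dC1 by (simp add: vk_def Jp_def, simp add: algebra_simps power2_eq_square)
  moreover have "frechet_derivative cas2 (at p) (vk 6) = (p$1) * (1 - ((p$1)^2+(p$2)^2+(p$3)^2+(p$4)^2+(p$5)^2+(p$6)^2)) - p$6 * (2 * (p$1 * p$6 - p$2 * p$5 + p$3 * p$4))"
    unfolding dC2 by (simp add: vk_def Jp_def, simp add: algebra_simps power2_eq_square)
  ultimately have "vk 6 \<in> leaf_tangent p"
    unfolding leaf_tangent_def using S C by simp
  then have "a * frechet_derivative F_L (at p) (vk 6) + b * frechet_derivative (G_L f1 f2 f3) (at p) (vk 6) = 0" by (rule H)
  moreover have "a * frechet_derivative F_L (at p) (vk 6) + b * frechet_derivative (G_L f1 f2 f3) (at p) (vk 6) = 2 * (b * f1 * p$6 - lam * p$6 - mu * (p$1))"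
    unfolding dF dG lam_def mu_def by (simp add: vk_def Jp_def, simp add: algebra_simps power2_eq_square)
  ultimately have e6: "b * f1 * p$6 = lam * p$6 + mu * p$1" by simp
  have "(p$1)^2+(p$2)^2+(p$3)^2 = 1 - (f1*(p$6)^2+f2*(p$5)^2+f3*(p$4)^2)/f1 \<or>
         (p$1)^2+(p$2)^2+(p$3)^2 = 1 - (f1*(p$6)^2+f2*(p$5)^2+f3*(p$4)^2)/f2 \<or>
         (p$1)^2+(p$2)^2+(p$3)^2 = 1 - (f1*(p$6)^2+f2*(p$5)^2+f3*(p$4)^2)/f3 \<or> (p$1)^2+(p$2)^2+(p$3)^2 = 0"
    by (rule alg[OF assms S C ab e1 e2 e3 e4 e5 e6])
  then show "z \<in> {(x, y). x = 1 - y / f1} \<union> {(x, y). x = 1 - y / f2} \<union>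
           {(x, y). x = 1 - y / f3} \<union> {(x, y). x = 0}"
    unfolding z F_L_def G_L_def l12_def l13_def l14_def l23_def l24_def l34_def by auto
qed

end
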